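(* Let $n\ge 3$ and let $Q$ be the set of all faces of $\Delta_{n+1}$ of the form $A(F)$, $B(F)$, $C(F,S)$, $D(F,S)$ with $F$ a face of $\Delta_n$ and $S\in F$ (equivalently, the faces of $\Delta_{n+1}$ containing no vertex of the form $\{i,n+1\}$, $2\le i\le n$). Then $Q$ is a subcomplex of $\Delta_{n+1}$ and it is contractible.
   Context: The Whitehouse complex $\Delta_n$ ($n\ge 3$) is the simplicial complex with vertex set $V_n=\{S\subseteq\{2,\dots,n\}: 2\le |S|\le n-2\}$, in which a subset $F\subseteq V_n$ is a face iff for all $S,T\in F$ one has $S\subseteq T$, $T\subseteq S$, or $S\cap T=\emptyset$. (So $\Delta_3=\{\emptyset\}$.) For a face $F$ of $\Delta_n$: $A(F)=F$; $B(F)=F\cup\{\{2,\dots,n\}\}$; for $S\in F$, $C(F,S)=\{T\cup\{n+1\}: T\in F, S\subseteq T\}\cup\{T: T\in F, S\not\subseteq T\}$ and $D(F,S)=C(F,S)\cup\{S\}$. *)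

theory Defs
  imports "HOL-Analysis.Analysis"
begin

definition wh_vertices :: "nat \<Rightarrow> nat set set" where
  "wh_vertices n = {S. S \<subseteq> {2..n} \<and> 2 \<le> card S \<and> card S + 2 \<le> n}"

definition whitehouse :: "nat \<Rightarrow> nat set set set" where
  "whitehouse n = {F. F \<subseteq> wh_vertices n \<and>
      (\<forall>S\<in>F. \<forall>T\<in>F. S \<subseteq> T \<or> T \<subseteq> S \<or> S \<inter> T = {})}"

definition faceA :: "nat set set \<Rightarrow> nat set set" where
  "faceA F = F"

definition faceB :: "nat \<Rightarrow> nat set set \<Rightarrow> nat set set" where
  "faceB n F = insert {2..n} F"

definition faceC :: "nat \<Rightarrow> nat set set \<Rightarrow> nat set \<Rightarrow> nat set set" where
  "faceC n F S = {insert (n+1) T | T. T \<in> F \<and> S \<subseteq> T} \<union> {T. T \<in> F \<and> \<not> S \<subseteq> T}"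

definition faceD :: "nat \<Rightarrow> nat set set \<Rightarrow> nat set \<Rightarrow> nat set set" where
  "faceD n F S = insert S (faceC n F S)"

definition Qcomplex :: "nat \<Rightarrow> nat set set set" where
  "Qcomplex n =
     {faceA F | F. F \<in> whitehouse n}
   \<union> {faceB n F | F. F \<in> whitehouse n}
   \<union> {faceC n F S | F S. F \<in> whitehouse n \<and> S \<in> F}
   \<union> {faceD n F S | F S. F \<in> whitehouse n \<and> S \<in> F}"

definition simplicial_complex :: "'v set set \<Rightarrow> bool" where
  "simplicial_complex K \<longleftrightarrow> (\<forall>F\<in>K. finite F \<and> (\<forall>G. G \<subseteq> F \<longrightarrow> G \<in> K))"

definition subcomplex :: "'v set set \<Rightarrow> 'v set set \<Rightarrow> bool" where
  "subcomplex L K \<longleftrightarrow> simplicial_complex L \<and> L \<subseteq> K"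

text \<open>Geometric realization: barycentric-coordinate functions v \<mapsto> t_v, nonnegative, summing to 1,
  supported on a face.\<close>
definition geom_realization :: "'v set set \<Rightarrow> ('v \<Rightarrow> real) set" where
  "geom_realization K = {f. (\<forall>v. 0 \<le> f v) \<and>
      (\<exists>F\<in>K. finite F \<and> {v. f v \<noteq> 0} \<subseteq> F \<and> sum f F = 1)}"

end

theory Submission
  imports Defs
begin

definition push :: "'v set \<Rightarrow> ('v \<Rightarrow> 'v) \<Rightarrow> ('v \<Rightarrow> real) \<Rightarrow> 'v \<Rightarrow> real" where
  "push V \<phi> f = (\<lambda>w. \<Sum>v\<in>{v\<in>V. \<phi> v = w}. f v)"

lemma push_eq:
  assumes "finite V" "F \<subseteq> V" "{v. f v \<noteq> 0} \<subseteq> F"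
  shows "push V \<phi> f w = (\<Sum>v\<in>{v\<in>F. \<phi> v = w}. f v)"
  unfolding push_def
  by (rule sum.mono_neutral_right) (use assms in auto)

lemma push_supp:
  assumes "finite V" "F \<subseteq> V" "{v. f v \<noteq> 0} \<subseteq> F"
  shows "{w. push V \<phi> f w \<noteq> 0} \<subseteq> \<phi> ` F"
proof
  fix w assume "w \<in> {w. push V \<phi> f w \<noteq> 0}"
  then have "push V \<phi> f w \<noteq> 0" by simp
  then have "(\<Sum>v\<in>{v\<in>F. \<phi> v = w}. f v) \<noteq> 0" by (simp only: push_eq[OF assms]) simp
  then have "{v\<in>F. \<phi> v = w} \<noteq> {}" by (metis sum.empty)
  then obtain v where "v \<in> F" "\<phi> v = w" by blast
  then show "w \<in> \<phi> ` F" by blast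
qed

lemma push_sum:
  assumes "finite V" "F \<subseteq> V" "{v. f v \<noteq> 0} \<subseteq> F"
  shows "sum (push V \<phi> f) (\<phi> ` F) = sum f F"
proof -
  have fF: "finite F" using assms finite_subset by blast
  have "sum f F = (\<Sum>y\<in>\<phi> ` F. sum f {x\<in>F. \<phi> x = y})" by (rule sum.image_gen[OF fF])
  also have "\<dots> = sum (push V \<phi> f) (\<phi> ` F)"
    by (rule sum.cong[OF refl]) (rule push_eq[OF assms, symmetric])
  finally show ?thesis by (rule sym)
qed

lemma push_nonneg: "(\<forall>v. 0 \<le> f v) \<Longrightarrow> 0 \<le> push V \<phi> f w"
  unfolding push_def by (simp add: sum_nonneg)

lemma cont_coord1: "continuous_on S (\<lambda>f. f v :: real)"
  by (rule continuous_on_subset[OF continuous_on_product_coordinates]) simp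

lemma cont_coord: "continuous_on S (\<lambda>z. snd z v :: real)"
proof -
  have "continuous_on S ((\<lambda>f. f v) \<circ> snd)"
    by (rule continuous_on_compose[OF continuous_on_snd[OF continuous_on_id] cont_coord1])
  then show ?thesis by (simp add: o_def)
qed

lemma push_cont: "continuous_on S (push V \<phi>)"
  unfolding push_def
  by (intro continuous_on_coordinatewise_then_product continuous_on_sum cont_coord1)

lemma hw_intro:
  assumes "continuous_on ({0..1::real} \<times> S) h" "h \<in> {0..1} \<times> S \<rightarrow> T"
    "\<forall>x\<in>S. h (0, x) = f x" "\<forall>x\<in>S. h (1, x) = g x"
  shows "homotopic_with_canon (\<lambda>x. True) S T f g"
  using assms by (simp add: homotopic_with) blast

lemma geomI:
  assumes "\<forall>v. 0 \<le> g v" "G \<in> K" "finite G" "{v. g v \<noteq> 0} \<subseteq> G" "sum g G = 1"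
  shows "g \<in> geom_realization K"
  unfolding geom_realization_def using assms by blast

lemma geomE:
  assumes "f \<in> geom_realization K"
  obtains F where "F \<in> K" "finite F" "{v. f v \<noteq> 0} \<subseteq> F" "sum f F = 1" "\<forall>v. 0 \<le> f v"
  using assms unfolding geom_realization_def by blast

lemma push_homotopic:
  fixes K :: "'v set set"
  assumes V: "finite V" and KV: "\<forall>F\<in>K. F \<subseteq> V" and Kphi: "\<forall>F\<in>K. F \<union> \<phi> ` F \<in> K"
  shows "homotopic_with_canon (\<lambda>x. True) (geom_realization K) (geom_realization K) id (push V \<phi>)"
proof -
  let ?h = "\<lambda>z::real \<times> ('v \<Rightarrow> real). (\<lambda>v. (1 - fst z) * snd z v + fst z * push V \<phi> (snd z) v)"
  have cont: "continuous_on ({0..1} \<times> geom_realization K) ?h"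
  proof (rule continuous_on_coordinatewise_then_product)
    fix v
    have c1: "continuous_on ({0..1} \<times> geom_realization K) (\<lambda>z::real \<times> ('v \<Rightarrow> real). push V \<phi> (snd z) v)"
    proof -
      have "continuous_on ({0..1} \<times> geom_realization K) ((\<lambda>g. push V \<phi> g v) \<circ> (\<lambda>z::real \<times> ('v \<Rightarrow> real). snd z))"
        by (rule continuous_on_compose[OF continuous_on_snd[OF continuous_on_id]
              continuous_on_product_then_coordinatewise[OF push_cont]])
      then show ?thesis by (simp add: o_def)
    qed
    show "continuous_on ({0..1} \<times> geom_realization K) (\<lambda>z::real \<times> ('v \<Rightarrow> real). (1 - fst z) * snd z v + fst z * push V \<phi> (snd z) v)"
      by (intro continuous_on_add continuous_on_mult continuous_on_diff continuous_on_const
          continuous_on_fst continuous_on_id cont_coord c1)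
  qed
  have mem: "?h (t, f) \<in> geom_realization K" if t: "0 \<le> t" "t \<le> 1" and f: "f \<in> geom_realization K" for t f
  proof -
    obtain F where F: "F \<in> K" "finite F" "{v. f v \<noteq> 0} \<subseteq> F" "sum f F = 1" and fnn: "\<forall>v. 0 \<le> f v"
      using f by (rule geomE)
    have FV: "F \<subseteq> V" using KV F(1) by blast
    let ?G = "F \<union> \<phi> ` F"
    have G: "?G \<in> K" using Kphi F(1) by blast
    have fG: "finite ?G" using F(2) by blast
    have "sum f ?G = sum f F"
      by (rule sum.mono_neutral_right[OF fG]) (use F(3) in auto)
    then have s1: "sum f ?G = 1" using F(4) by simp
    have ps: "{w. push V \<phi> f w \<noteq> 0} \<subseteq> \<phi> ` F" using push_supp[OF V FV F(3)] .
    have "sum (push V \<phi> f) ?G = sum (push V \<phi> f) (\<phi> ` F)"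
      by (rule sum.mono_neutral_right[OF fG]) (use ps in auto)
    then have s2: "sum (push V \<phi> f) ?G = 1"
      using push_sum[OF V FV F(3), of \<phi>] F(4) by simp
    have "sum (?h (t, f)) ?G = (1 - t) * sum f ?G + t * sum (push V \<phi> f) ?G"
      by (simp add: sum.distrib sum_distrib_left)
    then have sG: "sum (?h (t, f)) ?G = 1" using s1 s2 by simp
    have nn: "\<forall>v. 0 \<le> ?h (t, f) v"
    proof
      fix v
      have "0 \<le> f v" using fnn by blast
      moreover have "0 \<le> push V \<phi> f v" by (rule push_nonneg[OF fnn])
      ultimately show "0 \<le> ?h (t, f) v" using t by simp
    qed
    have supp: "{v. ?h (t, f) v \<noteq> 0} \<subseteq> ?G"
    proof
      fix v assume "v \<in> {v. ?h (t, f) v \<noteq> 0}"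
      then have "f v \<noteq> 0 \<or> push V \<phi> f v \<noteq> 0" by auto
      then show "v \<in> ?G" using F(3) ps by blast
    qed
    show ?thesis by (rule geomI[OF nn G fG supp sG])
  qed
  have e0: "\<forall>x\<in>geom_realization K. ?h (0, x) = id x"
  proof
    fix x show "?h (0, x) = id x" by (rule ext) simp
  qed
  have e1: "\<forall>x\<in>geom_realization K. ?h (1, x) = push V \<phi> x"
  proof
    fix x show "?h (1, x) = push V \<phi> x" by (rule ext) simp
  qed
  have hm: "?h \<in> {0..1} \<times> geom_realization K \<rightarrow> geom_realization K"
  proof (rule Pi_I)
    fix z assume "z \<in> {0..1::real} \<times> geom_realization K"
    then obtain t f where "z = (t, f)" "0 \<le> t" "t \<le> 1" "f \<in> geom_realization K" by auto
    then show "?h z \<in> geom_realization K" using mem by blast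
  qed
  show ?thesis by (rule hw_intro[OF cont hm e0 e1])
qed

lemma push_into:
  assumes V: "finite V" and KV: "\<forall>F\<in>K. F \<subseteq> V" and KL: "\<forall>F\<in>K. \<phi> ` F \<in> L"
  shows "push V \<phi> ` geom_realization K \<subseteq> geom_realization L"
proof
  fix g assume "g \<in> push V \<phi> ` geom_realization K"
  then obtain f where g: "g = push V \<phi> f" and f: "f \<in> geom_realization K" by blast
  obtain F where F: "F \<in> K" "finite F" "{v. f v \<noteq> 0} \<subseteq> F" "sum f F = 1" and fnn: "\<forall>v. 0 \<le> f v"
    using f by (rule geomE)
  have FV: "F \<subseteq> V" using KV F(1) by blast
  have nn: "\<forall>v. 0 \<le> g v"
  proof
    fix v show "0 \<le> g v" unfolding g by (rule push_nonneg[OF fnn])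
  qed
  have L: "\<phi> ` F \<in> L" using KL F(1) by blast
  have fin: "finite (\<phi> ` F)" using F(2) by blast
  have su: "{v. g v \<noteq> 0} \<subseteq> \<phi> ` F" unfolding g by (rule push_supp[OF V FV F(3)])
  have s: "sum g (\<phi> ` F) = 1" unfolding g by (rule trans[OF push_sum[OF V FV F(3)] F(4)])
  show "g \<in> geom_realization L" by (rule geomI[OF nn L fin su s])
qed

lemma contractible_step:
  assumes hom: "homotopic_with_canon (\<lambda>x. True) S S id r" and rc: "continuous_on S r"
    and rs: "r ` S \<subseteq> T" and TS: "T \<subseteq> S" and cT: "contractible T"
  shows "contractible S"
proof -
  obtain a where a: "homotopic_with_canon (\<lambda>x. True) T T id (\<lambda>x. a)"
    using cT unfolding contractible_def by blast
  have "homotopic_with_canon (\<lambda>x. True) S T (id \<circ> r) ((\<lambda>x. a) \<circ> r)"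
    by (rule homotopic_with_compose_continuous_map_right[OF a]) (use rc rs in auto)
  then have "homotopic_with_canon (\<lambda>x. True) S S r (\<lambda>x. a)"
    using homotopic_with_subset_right TS by (simp add: o_def) blast
  then show ?thesis unfolding contractible_def using hom homotopic_with_trans by blast
qed

lemma contractible_cone:
  assumes V: "finite V" and KV: "\<forall>F\<in>K. F \<subseteq> V" and Ka: "\<forall>F\<in>K. insert a F \<in> K"
  shows "contractible (geom_realization K)"
proof -
  have K1: "\<forall>F\<in>K. F \<union> (\<lambda>_. a) ` F \<in> K"
    using Ka by (metis Un_insert_right image_constant_conv image_empty sup_bot.right_neutral)
  have h: "homotopic_with_canon (\<lambda>x. True) (geom_realization K) (geom_realization K) id (push V (\<lambda>_. a))"
    by (rule push_homotopic[OF V KV K1])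
  let ?c = "\<lambda>w. if w = a then 1 else (0::real)"
  have eq: "push V (\<lambda>_. a) f = ?c" if f: "f \<in> geom_realization K" for f
  proof -
    obtain F where F: "F \<in> K" "finite F" "{v. f v \<noteq> 0} \<subseteq> F" "sum f F = 1"
      using f unfolding geom_realization_def by auto
    have FV: "F \<subseteq> V" using KV F by auto
    show ?thesis using push_eq[OF V FV F(3), of "\<lambda>_. a"] F(4) by (auto simp: fun_eq_iff)
  qed
  have "homotopic_with_canon (\<lambda>x. True) (geom_realization K) (geom_realization K) (push V (\<lambda>_. a)) (\<lambda>x. ?c)"
    by (rule homotopic_with_equal) (use eq push_cont homotopic_with_imp_continuous_maps[OF h] in auto)
  then show ?thesis unfolding contractible_def using h homotopic_with_trans by blast
qed

definition cmp :: "nat set \<Rightarrow> nat set \<Rightarrow> bool" where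
  "cmp S T \<longleftrightarrow> S \<subseteq> T \<or> T \<subseteq> S \<or> S \<inter> T = {}"

lemma cmp_sym: "cmp S T \<Longrightarrow> cmp T S"
  unfolding cmp_def by blast

lemma cmp_diff: "cmp S T \<Longrightarrow> cmp (S - A) (T - A)"
  unfolding cmp_def by blast

lemma whI:
  assumes "\<And>X. X \<in> G \<Longrightarrow> X \<in> wh_vertices m" "\<And>X Y. X \<in> G \<Longrightarrow> Y \<in> G \<Longrightarrow> cmp X Y"
  shows "G \<in> whitehouse m"
  using assms unfolding whitehouse_def cmp_def by blast

lemma whD:
  assumes "G \<in> whitehouse m" "X \<in> G"
  shows "X \<subseteq> {2..m}" "2 \<le> card X" "card X + 2 \<le> m"
  using assms unfolding whitehouse_def wh_vertices_def by auto

lemma whD2: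
  assumes "G \<in> whitehouse m" "X \<in> G" "Y \<in> G"
  shows "cmp X Y"
  using assms unfolding whitehouse_def cmp_def by blast

lemma wh_vertI:
  assumes "X \<subseteq> {2..m}" "2 \<le> card X" "card X + 2 \<le> m"
  shows "X \<in> wh_vertices m"
  using assms unfolding wh_vertices_def by blast

lemma wh_sub:
  assumes "G \<in> whitehouse m" "H \<subseteq> G"
  shows "H \<in> whitehouse m"
proof (rule whI)
  fix X assume "X \<in> H"
  then have X: "X \<in> G" using assms(2) by blast
  show "X \<in> wh_vertices m" by (rule wh_vertI[OF whD[OF assms(1) X]])
next
  fix X Y assume "X \<in> H" "Y \<in> H"
  then show "cmp X Y" using whD2[OF assms(1)] assms(2) by blast
qed

lemma wh_fin: "G \<in> whitehouse m \<Longrightarrow> X \<in> G \<Longrightarrow> finite X"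
  by (rule finite_subset[OF whD(1) finite_atLeastAtMost])

definition Kst :: "nat \<Rightarrow> nat \<Rightarrow> nat set set set" where
  "Kst n k = {G \<in> whitehouse (n+1). \<forall>U\<in>G. n+1 \<in> U \<longrightarrow> k < card U}"

definition phik :: "nat \<Rightarrow> nat \<Rightarrow> nat set \<Rightarrow> nat set" where
  "phik n k U = (if n+1 \<in> U \<and> card U = k then U - {n+1} else U)"

lemma phik_id: "\<not> (n+1 \<in> X \<and> card X = k) \<Longrightarrow> phik n k X = X"
  unfolding phik_def by (rule if_not_P)

lemma phik_rm: "n+1 \<in> X \<Longrightarrow> card X = k \<Longrightarrow> phik n k X = X - {n+1}"
  unfolding phik_def by simp

lemma Kst_V: "G \<in> Kst n k \<Longrightarrow> G \<subseteq> Pow {2..n+1}"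
  unfolding Kst_def using whD(1) by blast

lemma Kst_mono: "k \<le> j \<Longrightarrow> Kst n j \<subseteq> Kst n k"
  unfolding Kst_def by auto

lemma geom_mono: "K \<subseteq> L \<Longrightarrow> geom_realization K \<subseteq> geom_realization L"
  unfolding geom_realization_def by blast

lemma KstD:
  assumes "G \<in> Kst n k"
  shows "G \<in> whitehouse (n+1)" "\<And>U. U \<in> G \<Longrightarrow> n+1 \<in> U \<Longrightarrow> k < card U"
  using assms unfolding Kst_def by blast+

lemma phik_comp:
  assumes G: "G \<in> Kst n (k-1)" and k: "3 \<le> k" and X: "X \<in> G" and Y: "Y \<in> G"
    and Xn: "n+1 \<in> X" and Xk: "card X = k"
  shows "cmp (X - {n+1}) Y"
proof -
  have Gw: "G \<in> whitehouse (n+1)" by (rule KstD(1)[OF G])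
  have c: "cmp X Y" by (rule whD2[OF Gw X Y])
  have fX: "finite X" by (rule wh_fin[OF Gw X])
  show ?thesis
  proof (cases "Y \<subseteq> X")
    case True
    show ?thesis
    proof (cases "n+1 \<in> Y")
      case True
      have "k - 1 < card Y" by (rule KstD(2)[OF G Y True])
      then have "card X \<le> card Y" using Xk k by linarith
      then have "Y = X" using card_seteq[OF fX \<open>Y \<subseteq> X\<close>] by blast
      then show ?thesis unfolding cmp_def by blast
    next
      case False
      then show ?thesis using \<open>Y \<subseteq> X\<close> unfolding cmp_def by blast
    qed
  next
    case False
    then show ?thesis using c unfolding cmp_def by blast
  qed
qed

lemma phik_vert:
  assumes G: "G \<in> Kst n (k-1)" and k: "3 \<le> k" and X: "X \<in> G"
  shows "phik n k X \<in> wh_vertices (n+1)"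
proof (cases "n+1 \<in> X \<and> card X = k")
  case True
  have Gw: "G \<in> whitehouse (n+1)" using G unfolding Kst_def by auto
  have fX: "finite X" by (rule wh_fin[OF Gw X])
  have c: "card (X - {n+1}) = k - 1" using True fX by simp
  have "X - {n+1} \<in> wh_vertices (n+1)"
    by (rule wh_vertI) (use whD[OF Gw X] c k True in auto)
  then show ?thesis using phik_rm[of n X k] True by simp
next
  case False
  have Gw: "G \<in> whitehouse (n+1)" using G unfolding Kst_def by auto
  have "X \<in> wh_vertices (n+1)" by (rule wh_vertI) (use whD[OF Gw X] in auto)
  then show ?thesis using phik_id[OF False] by simp
qed

lemma phik_comp2:
  assumes G: "G \<in> Kst n (k-1)" and k: "3 \<le> k" and X: "X \<in> G" and Y: "Y \<in> G"
  shows "cmp (phik n k X) Y"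
proof (cases "n+1 \<in> X \<and> card X = k")
  case True
  then show ?thesis using phik_comp[OF G k X Y] phik_rm[of n X k] by simp
next
  case False
  have Gw: "G \<in> whitehouse (n+1)" using G unfolding Kst_def by auto
  show ?thesis using whD2[OF Gw X Y] phik_id[OF False] by simp
qed

lemma phik_comp3:
  assumes G: "G \<in> Kst n (k-1)" and k: "3 \<le> k" and X: "X \<in> G" and Y: "Y \<in> G"
  shows "cmp (phik n k X) (phik n k Y)"
proof (cases "n+1 \<in> Y \<and> card Y = k")
  case True
  have Gw: "G \<in> whitehouse (n+1)" using G unfolding Kst_def by auto
  have "cmp (phik n k X) (Y - {n+1})"
  proof (cases "n+1 \<in> X \<and> card X = k")
    case True
    then show ?thesis using cmp_diff[OF whD2[OF Gw X Y], of "{n+1}"] phik_rm[of n X k] by simp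
  next
    case False
    then show ?thesis using cmp_sym[OF phik_comp[OF G k Y X]] True phik_id[OF False] by simp
  qed
  then show ?thesis using True phik_rm[of n Y k] by simp
next
  case False
  then show ?thesis using phik_comp2[OF G k X Y] phik_id[OF False] by simp
qed

lemma Kst_step1:
  assumes G: "G \<in> Kst n (k-1)" and k: "3 \<le> k"
  shows "G \<union> phik n k ` G \<in> Kst n (k-1)"
proof -
  have Gw: "G \<in> whitehouse (n+1)" by (rule KstD(1)[OF G])
  have W: "G \<union> phik n k ` G \<in> whitehouse (n+1)"
  proof (rule whI)
    fix X assume "X \<in> G \<union> phik n k ` G"
    then show "X \<in> wh_vertices (n+1)"
    proof
      assume X: "X \<in> G" show ?thesis by (rule wh_vertI[OF whD[OF Gw X]])
    next
      assume "X \<in> phik n k ` G"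
      then obtain Y where Y: "Y \<in> G" "X = phik n k Y" by blast
      then show ?thesis using phik_vert[OF G k Y(1)] by simp
    qed
  next
    fix X Y assume X: "X \<in> G \<union> phik n k ` G" and Y: "Y \<in> G \<union> phik n k ` G"
    show "cmp X Y"
    proof (cases "X \<in> G")
      case XG: True
      show ?thesis
      proof (cases "Y \<in> G")
        case True then show ?thesis using whD2[OF Gw XG] by blast
      next
        case False
        then obtain Y' where Y': "Y' \<in> G" "Y = phik n k Y'" using Y by blast
        show ?thesis using cmp_sym[OF phik_comp2[OF G k Y'(1) XG]] Y'(2) by simp
      qed
    next
      case False
      then obtain X' where X': "X' \<in> G" "X = phik n k X'" using X by blast
      show ?thesis
      proof (cases "Y \<in> G")
        case True then show ?thesis using phik_comp2[OF G k X'(1) True] X'(2) by simp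
      next
        case False
        then obtain Y' where Y': "Y' \<in> G" "Y = phik n k Y'" using Y by blast
        show ?thesis using phik_comp3[OF G k X'(1) Y'(1)] X'(2) Y'(2) by simp
      qed
    qed
  qed
  have C: "k - 1 < card U" if U: "U \<in> G \<union> phik n k ` G" "n+1 \<in> U" for U
  proof (cases "U \<in> G")
    case True show ?thesis by (rule KstD(2)[OF G True U(2)])
  next
    case False
    then obtain Y where Y: "Y \<in> G" "U = phik n k Y" using U(1) by blast
    show ?thesis
    proof (cases "n+1 \<in> Y \<and> card Y = k")
      case True then have "U = Y - {n+1}" using Y(2) phik_rm[of n Y k] by simp
      then show ?thesis using U(2) by simp
    next
      case False then have UY: "U = Y" using Y(2) phik_id[OF False] by simp
      show ?thesis unfolding UY by (rule KstD(2)[OF G Y(1)]) (use U(2) UY in simp)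
    qed
  qed
  show ?thesis unfolding Kst_def using W C by blast
qed

lemma Kst_step2:
  assumes G: "G \<in> Kst n (k-1)" and k: "3 \<le> k"
  shows "phik n k ` G \<in> Kst n k"
proof -
  have W: "phik n k ` G \<in> whitehouse (n+1)"
    by (rule wh_sub[OF KstD(1)[OF Kst_step1[OF G k]]]) blast
  have C: "k < card U" if U: "U \<in> phik n k ` G" "n+1 \<in> U" for U
  proof -
    obtain Y where Y: "Y \<in> G" "U = phik n k Y" using U(1) by blast
    show ?thesis
    proof (cases "n+1 \<in> Y \<and> card Y = k")
      case True then have "U = Y - {n+1}" using Y(2) phik_rm[of n Y k] by simp
      then show ?thesis using U(2) by simp
    next
      case False then have UY: "U = Y" using Y(2) phik_id[OF False] by simp
      then have "k - 1 < card Y" using KstD(2)[OF G Y(1)] U(2) by simp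
      then show ?thesis using False UY U(2) by simp
    qed
  qed
  show ?thesis unfolding Kst_def using W C by blast
qed

lemma Kst_cone:
  assumes n: "3 \<le> n" and G: "G \<in> Kst n (n-1)"
  shows "insert {2..n} G \<in> Kst n (n-1)"
proof -
  have Gw: "G \<in> whitehouse (n+1)" by (rule KstD(1)[OF G])
  have sub: "U \<subseteq> {2..n}" if U: "U \<in> G" for U
  proof -
    have "n+1 \<notin> U"
    proof
      assume "n+1 \<in> U"
      then have "n - 1 < card U" by (rule KstD(2)[OF G U])
      moreover have "card U + 2 \<le> n+1" by (rule whD(3)[OF Gw U])
      ultimately show False using n by linarith
    qed
    moreover have "U \<subseteq> {2..n+1}" by (rule whD(1)[OF Gw U])
    ultimately show ?thesis
    proof -
      assume a: "n+1 \<notin> U" and b: "U \<subseteq> {2..n+1}"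
      show ?thesis
      proof
        fix x assume "x \<in> U"
        then have "x \<in> {2..n+1}" "x \<noteq> n+1" using a b by auto
        then show "x \<in> {2..n}" by auto
      qed
    qed
  qed
  have cn: "card {2..n} = n - 1" by simp
  have W: "insert {2..n} G \<in> whitehouse (n+1)"
  proof (rule whI)
    fix X assume "X \<in> insert {2..n} G"
    then show "X \<in> wh_vertices (n+1)"
    proof
      assume "X = {2..n}" then show ?thesis using cn n by (intro wh_vertI) auto
    next
      assume X: "X \<in> G" show ?thesis by (rule wh_vertI[OF whD[OF Gw X]])
    qed
  next
    fix X Y assume X: "X \<in> insert {2..n} G" and Y: "Y \<in> insert {2..n} G"
    show "cmp X Y"
    proof (cases "X = {2..n}")
      case True
      then show ?thesis using Y sub unfolding cmp_def by blast
    next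
      case False
      then have XG: "X \<in> G" using X by blast
      show ?thesis
      proof (cases "Y = {2..n}")
        case True then show ?thesis using sub[OF XG] unfolding cmp_def by blast
      next
        case False then show ?thesis using whD2[OF Gw XG] Y by blast
      qed
    qed
  qed
  have C: "n - 1 < card U" if U: "U \<in> insert {2..n} G" "n+1 \<in> U" for U
    using U KstD(2)[OF G] by auto
  show ?thesis unfolding Kst_def using W C by blast
qed

lemma Kst_contractible:
  assumes n: "3 \<le> n" and k: "2 \<le> k" "k \<le> n - 1"
  shows "contractible (geom_realization (Kst n k))"
  using k(2)
proof (induction k rule: inc_induct)
  case base
  show ?case
    by (rule contractible_cone[where V = "Pow {2..n+1}" and a = "{2..n}"])
       (use Kst_V Kst_cone[OF n] in auto)
next
  case (step j)
  have j3: "3 \<le> Suc j" using step k by simp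
  have e: "Suc j - 1 = j" by simp
  let ?r = "push (Pow {2..n+1}) (phik n (Suc j))"
  have h: "homotopic_with_canon (\<lambda>x. True) (geom_realization (Kst n j)) (geom_realization (Kst n j)) id ?r"
    by (rule push_homotopic) (use Kst_V Kst_step1[OF _ j3] e in auto)
  have i: "?r ` geom_realization (Kst n j) \<subseteq> geom_realization (Kst n (Suc j))"
    by (rule push_into) (use Kst_V Kst_step2[OF _ j3] e in auto)
  show ?case
    by (rule contractible_step[OF h push_cont i geom_mono[OF Kst_mono] step.IH]) simp
qed

lemma Kst_sub:
  assumes G: "G \<in> Kst n k" and H: "H \<subseteq> G"
  shows "H \<in> Kst n k"
proof -
  have W: "H \<in> whitehouse (n+1)" by (rule wh_sub[OF KstD(1)[OF G] H])
  have C: "k < card U" if "U \<in> H" "n+1 \<in> U" for U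
    using KstD(2)[OF G] H that by blast
  show ?thesis unfolding Kst_def using W C by blast
qed

lemma vert_lift:
  assumes F: "F \<in> whitehouse n" and X: "X \<in> F"
  shows "X \<in> wh_vertices (n+1)" "n+1 \<notin> X" "X \<subseteq> {2..n}" "2 \<le> card X" "card X + 2 \<le> n" "finite X"
proof -
  show "X \<subseteq> {2..n}" "2 \<le> card X" "card X + 2 \<le> n" using whD[OF F X] by auto
  then show "X \<in> wh_vertices (n+1)" by (intro wh_vertI) auto
  show "n+1 \<notin> X" using \<open>X \<subseteq> {2..n}\<close> by auto
  show "finite X" using \<open>X \<subseteq> {2..n}\<close> finite_subset by blast
qed

lemma A_in:
  assumes F: "F \<in> whitehouse n"
  shows "F \<in> Kst n 2"
proof -
  have "F \<in> whitehouse (n+1)"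
    by (rule whI) (use vert_lift(1)[OF F] whD2[OF F] in auto)
  then show ?thesis unfolding Kst_def using vert_lift(2)[OF F] by blast
qed

lemma B_in:
  assumes n: "3 \<le> n" and F: "F \<in> whitehouse n"
  shows "insert {2..n} F \<in> Kst n 2"
proof -
  have cn: "card {2..n} = n - 1" by simp
  have v: "{2..n} \<in> wh_vertices (n+1)" using cn n by (intro wh_vertI) auto
  have W: "insert {2..n} F \<in> whitehouse (n+1)"
  proof (rule whI)
    fix X assume "X \<in> insert {2..n} F"
    then show "X \<in> wh_vertices (n+1)" using v vert_lift(1)[OF F] by blast
  next
    fix X Y assume X: "X \<in> insert {2..n} F" and Y: "Y \<in> insert {2..n} F"
    show "cmp X Y"
    proof (cases "X = {2..n}")
      case True
      then show ?thesis using Y vert_lift(3)[OF F] unfolding cmp_def by blast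
    next
      case False
      then have XG: "X \<in> F" using X by blast
      show ?thesis
      proof (cases "Y = {2..n}")
        case True then show ?thesis using vert_lift(3)[OF F XG] unfolding cmp_def by blast
      next
        case False then show ?thesis using whD2[OF F XG] Y by blast
      qed
    qed
  qed
  have C: "2 < card U" if U: "U \<in> insert {2..n} F" "n+1 \<in> U" for U
    using U vert_lift(2)[OF F] by auto
  show ?thesis unfolding Kst_def using W C by blast
qed

lemma faceD_cases:
  assumes "Y \<in> faceD n F S"
  shows "Y = S \<or> (\<exists>T\<in>F. S \<subseteq> T \<and> Y = insert (n+1) T) \<or> (Y \<in> F \<and> \<not> S \<subseteq> Y)"
  using assms unfolding faceD_def faceC_def by blast

lemma D_in:
  assumes F: "F \<in> whitehouse n" and S: "S \<in> F"
  shows "faceD n F S \<in> Kst n 2"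
proof -
  have Sne: "S \<noteq> {}" using vert_lift(4)[OF F S] by (metis card.empty not_numeral_le_zero)
  have insv: "insert (n+1) T \<in> wh_vertices (n+1)" "2 < card (insert (n+1) T)" if T: "T \<in> F" for T
  proof -
    have c: "card (insert (n+1) T) = card T + 1" using vert_lift(2,6)[OF F T] by simp
    show "insert (n+1) T \<in> wh_vertices (n+1)"
      by (rule wh_vertI) (use c vert_lift(3,4,5)[OF F T] in auto)
    show "2 < card (insert (n+1) T)" using c vert_lift(4)[OF F T] by simp
  qed
  have c_S_ins: "cmp S (insert (n+1) T)" if "S \<subseteq> T" for T
    using that unfolding cmp_def by blast
  have c_ins_ins: "cmp (insert (n+1) T1) (insert (n+1) T2)"
    if T: "T1 \<in> F" "T2 \<in> F" "S \<subseteq> T1" "S \<subseteq> T2" for T1 T2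
  proof -
    have "cmp T1 T2" by (rule whD2[OF F T(1,2)])
    then show ?thesis using T(3,4) Sne unfolding cmp_def by blast
  qed
  have c_ins_T: "cmp (insert (n+1) T1) T2"
    if T: "T1 \<in> F" "T2 \<in> F" "S \<subseteq> T1" "\<not> S \<subseteq> T2" for T1 T2
  proof -
    have "cmp T1 T2" by (rule whD2[OF F T(1,2)])
    moreover have "n+1 \<notin> T2" by (rule vert_lift(2)[OF F T(2)])
    ultimately show ?thesis using T(3,4) unfolding cmp_def by blast
  qed
  have verts: "Y \<in> wh_vertices (n+1)" if Y: "Y \<in> faceD n F S" for Y
    using faceD_cases[OF Y] insv vert_lift(1)[OF F] S by blast
  have cnd: "2 < card Y" if Y: "Y \<in> faceD n F S" "n+1 \<in> Y" for Y
    using faceD_cases[OF Y(1)] insv(2) vert_lift(2)[OF F] S Y(2) by blast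
  have cm: "cmp X Y" if X: "X \<in> faceD n F S" and Y: "Y \<in> faceD n F S" for X Y
  proof -
    have cs: "cmp S Z" if "Z \<in> faceD n F S" for Z
      using faceD_cases[OF that] c_S_ins whD2[OF F S] unfolding cmp_def by blast
    show ?thesis
    proof (cases "X = S")
      case True then show ?thesis using cs[OF Y] by simp
    next
      case XS: False
      show ?thesis
      proof (cases "Y = S")
        case True then show ?thesis using cmp_sym[OF cs[OF X]] by simp
      next
        case YS: False
        have Xc: "(\<exists>T\<in>F. S \<subseteq> T \<and> X = insert (n+1) T) \<or> (X \<in> F \<and> \<not> S \<subseteq> X)"
          using faceD_cases[OF X] XS by blast
        have Yc: "(\<exists>T\<in>F. S \<subseteq> T \<and> Y = insert (n+1) T) \<or> (Y \<in> F \<and> \<not> S \<subseteq> Y)"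
          using faceD_cases[OF Y] YS by blast
        show ?thesis
        proof (cases "X \<in> F \<and> \<not> S \<subseteq> X")
          case Xf: True
          show ?thesis
          proof (cases "Y \<in> F \<and> \<not> S \<subseteq> Y")
            case True then show ?thesis using whD2[OF F] Xf by blast
          next
            case False
            then obtain T where T: "T \<in> F" "S \<subseteq> T" "Y = insert (n+1) T" using Yc by blast
            show ?thesis using cmp_sym[OF c_ins_T[OF T(1) _ T(2)]] Xf T(3) by blast
          qed
        next
          case False
          then obtain T1 where T1: "T1 \<in> F" "S \<subseteq> T1" "X = insert (n+1) T1" using Xc by blast
          show ?thesis
          proof (cases "Y \<in> F \<and> \<not> S \<subseteq> Y")
            case True then show ?thesis using c_ins_T[OF T1(1) _ T1(2)] T1(3) by blast
          next
            case False
            then obtain T where T: "T \<in> F" "S \<subseteq> T" "Y = insert (n+1) T" using Yc by blast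
            show ?thesis using c_ins_ins[OF T1(1) T(1) T1(2) T(2)] T1(3) T(3) by simp
          qed
        qed
      qed
    qed
  qed
  have W: "faceD n F S \<in> whitehouse (n+1)"
    by (rule whI) (use verts cm in auto)
  show ?thesis unfolding Kst_def using W cnd by blast
qed

lemma C_in:
  assumes F: "F \<in> whitehouse n" and S: "S \<in> F"
  shows "faceC n F S \<in> Kst n 2"
  by (rule Kst_sub[OF D_in[OF F S]]) (auto simp: faceD_def)

lemma Q_sub:
  assumes n: "3 \<le> n" and G: "G \<in> Qcomplex n"
  shows "G \<in> Kst n 2"
proof -
  have "(\<exists>F. G = faceA F \<and> F \<in> whitehouse n) \<or> (\<exists>F. G = faceB n F \<and> F \<in> whitehouse n)
     \<or> (\<exists>F S. G = faceC n F S \<and> F \<in> whitehouse n \<and> S \<in> F)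
     \<or> (\<exists>F S. G = faceD n F S \<and> F \<in> whitehouse n \<and> S \<in> F)"
    using G unfolding Qcomplex_def by blast
  then show ?thesis
    using A_in B_in[OF n] C_in D_in unfolding faceA_def faceB_def by blast
qed

lemma QA: "F \<in> whitehouse n \<Longrightarrow> faceA F \<in> Qcomplex n"
  unfolding Qcomplex_def by blast
lemma QB: "F \<in> whitehouse n \<Longrightarrow> faceB n F \<in> Qcomplex n"
  unfolding Qcomplex_def by blast
lemma QC: "F \<in> whitehouse n \<Longrightarrow> S \<in> F \<Longrightarrow> faceC n F S \<in> Qcomplex n"
  unfolding Qcomplex_def by blast
lemma QD: "F \<in> whitehouse n \<Longrightarrow> S \<in> F \<Longrightarrow> faceD n F S \<in> Qcomplex n"
  unfolding Qcomplex_def by blast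

lemma faceC_iff:
  "Y \<in> faceC n F S \<longleftrightarrow> (\<exists>T. Y = insert (n+1) T \<and> T \<in> F \<and> S \<subseteq> T) \<or> (Y \<in> F \<and> \<not> S \<subseteq> Y)"
  unfolding faceC_def by blast

lemma Q_sup1:
  assumes n: "3 \<le> n" and G: "G \<in> Kst n 2" and no: "\<forall>X\<in>G. n+1 \<notin> X"
  shows "G \<in> Qcomplex n"
proof -
  have Gw: "G \<in> whitehouse (n+1)" by (rule KstD(1)[OF G])
  have cn: "card {2..n} = n - 1" by simp
  have sub: "X \<subseteq> {2..n}" if X: "X \<in> G" for X
  proof
    fix x assume "x \<in> X"
    then have "x \<in> {2..n+1}" "x \<noteq> n+1" using whD(1)[OF Gw X] no X by auto
    then show "x \<in> {2..n}" by auto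
  qed
  have H: "G - {{2..n}} \<in> whitehouse n"
  proof (rule whI)
    fix X assume X: "X \<in> G - {{2..n}}"
    then have XG: "X \<in> G" and Xn: "X \<noteq> {2..n}" by auto
    have "X \<subset> {2..n}" using sub[OF XG] Xn by blast
    then have "card X < n - 1" using psubset_card_mono[of "{2..n}" X] cn by simp
    then show "X \<in> wh_vertices n" using sub[OF XG] whD(2)[OF Gw XG] by (intro wh_vertI) auto
  next
    fix X Y assume "X \<in> G - {{2..n}}" "Y \<in> G - {{2..n}}"
    then show "cmp X Y" using whD2[OF Gw] by blast
  qed
  show ?thesis
  proof (cases "{2..n} \<in> G")
    case True
    then have "G = faceB n (G - {{2..n}})" unfolding faceB_def by blast
    then show ?thesis using QB[OF H] by simp
  next
    case False
    then have "G - {{2..n}} = G" by simp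
    then show ?thesis using QA[OF H] unfolding faceA_def by simp
  qed
qed

lemma Q_sup2:
  assumes n: "3 \<le> n" and G: "G \<in> Kst n 2" and U1: "U1 \<in> G" "n+1 \<in> U1"
    and mn: "\<And>U. U \<in> G \<Longrightarrow> n+1 \<in> U \<Longrightarrow> card U1 \<le> card U"
  shows "G \<in> Qcomplex n"
proof -
  have Gw: "G \<in> whitehouse (n+1)" by (rule KstD(1)[OF G])
  have fU1: "finite U1" by (rule wh_fin[OF Gw U1(1)])
  have U1s: "U1 \<subseteq> {2..n+1}" "card U1 + 2 \<le> n+1" using whD[OF Gw U1(1)] by auto
  have U1c: "2 < card U1" by (rule KstD(2)[OF G U1])
  define S where "S = U1 - {n+1}"
  have cS: "card S = card U1 - 1" unfolding S_def using fU1 U1(2) by simp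
  have Sne: "S \<noteq> {}"
  proof
    assume "S = {}" then show False using cS U1c by simp
  qed
  have Ss: "S \<subseteq> {2..n}" unfolding S_def using U1s(1) by auto
  have U1S: "U1 = insert (n+1) S" unfolding S_def using U1(2) by auto
  have subX: "X \<subseteq> {2..n}" if X: "X \<in> G" "n+1 \<notin> X" for X
  proof
    fix x assume "x \<in> X"
    then have "x \<in> {2..n+1}" "x \<noteq> n+1" using whD(1)[OF Gw X(1)] X(2) by auto
    then show "x \<in> {2..n}" by auto
  qed
  have chain: "U1 \<subseteq> U" if U: "U \<in> G" "n+1 \<in> U" for U
  proof -
    have c: "cmp U1 U" by (rule whD2[OF Gw U1(1) U(1)])
    have fU: "finite U" by (rule wh_fin[OF Gw U(1)])
    show ?thesis
    proof (cases "U \<subseteq> U1")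
      case True
      have "card U1 \<le> card U" by (rule mn[OF U])
      then have "U = U1" using card_seteq[OF fU1 True] by blast
      then show ?thesis by simp
    next
      case False
      then show ?thesis using c U(2) U1(2) unfolding cmp_def by blast
    qed
  qed
  have noS: "X = S" if X: "X \<in> G" "n+1 \<notin> X" "S \<subseteq> X" for X
  proof -
    have c: "cmp X U1" by (rule whD2[OF Gw X(1) U1(1)])
    have "X \<subseteq> U1" using c X(2,3) U1(2) Sne unfolding cmp_def S_def by blast
    then have "X \<subseteq> S" using X(2) unfolding S_def by blast
    then show ?thesis using X(3) by blast
  qed
  have notfull: "card X + 2 \<le> n" if X: "X \<in> G" "n+1 \<notin> X" for X
  proof -
    have c: "cmp X U1" by (rule whD2[OF Gw X(1) U1(1)])
    have fX: "finite X" by (rule wh_fin[OF Gw X(1)])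
    have Xs: "X \<subseteq> {2..n}" by (rule subX[OF X])
    show ?thesis
    proof (cases "X \<subseteq> U1")
      case True
      then have "X \<subseteq> S" using X(2) unfolding S_def by blast
      then have "card X \<le> card S" using card_mono fU1 S_def by (metis finite_Diff)
      then show ?thesis using cS U1s(2) U1c by linarith
    next
      case False
      then have "X \<inter> U1 = {}" using c X(2) U1(2) unfolding cmp_def by blast
      then have "X \<subseteq> {2..n} - S" using Xs unfolding S_def by blast
      then have "card X \<le> card ({2..n} - S)" by (rule card_mono[rotated]) simp
      also have "\<dots> = card {2..n} - card S" using Ss by (simp add: card_Diff_subset finite_subset)
      finally show ?thesis using cS U1c n by simp
    qed
  qed
  define F where "F = (\<lambda>U. U - {n+1}) ` G"
  have Fw: "F \<in> whitehouse n"
  proof (rule whI)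
    fix Y assume "Y \<in> F"
    then obtain X where X: "X \<in> G" "Y = X - {n+1}" unfolding F_def by blast
    have fX: "finite X" by (rule wh_fin[OF Gw X(1)])
    show "Y \<in> wh_vertices n"
    proof (cases "n+1 \<in> X")
      case True
      have cX: "card Y = card X - 1" using X(2) True fX by simp
      have "2 < card X" by (rule KstD(2)[OF G X(1) True])
      moreover have "card X + 2 \<le> n+1" "X \<subseteq> {2..n+1}" using whD[OF Gw X(1)] by auto
      moreover have "Y \<subseteq> {2..n}" using \<open>X \<subseteq> {2..n+1}\<close> X(2) by auto
      ultimately show ?thesis using cX by (intro wh_vertI) auto
    next
      case False
      then have "Y = X" using X(2) by simp
      then show ?thesis using subX[OF X(1) False] notfull[OF X(1) False] whD(2)[OF Gw X(1)]
        by (intro wh_vertI) auto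
    qed
  next
    fix Y Z assume "Y \<in> F" "Z \<in> F"
    then obtain X1 X2 where "X1 \<in> G" "Y = X1 - {n+1}" "X2 \<in> G" "Z = X2 - {n+1}"
      unfolding F_def by blast
    then show "cmp Y Z" using cmp_diff[OF whD2[OF Gw]] by blast
  qed
  have SF: "S \<in> F" unfolding F_def S_def using U1(1) by blast
  have C_G: "faceC n F S \<subseteq> G"
  proof
    fix Y assume "Y \<in> faceC n F S"
    then have "(\<exists>T. Y = insert (n+1) T \<and> T \<in> F \<and> S \<subseteq> T) \<or> (Y \<in> F \<and> \<not> S \<subseteq> Y)"
      by (simp only: faceC_iff)
    then show "Y \<in> G"
    proof
      assume "\<exists>T. Y = insert (n+1) T \<and> T \<in> F \<and> S \<subseteq> T"
      then obtain X where X: "X \<in> G" "Y = insert (n+1) (X - {n+1})" "S \<subseteq> X - {n+1}"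
        unfolding F_def by blast
      show "Y \<in> G"
      proof (cases "n+1 \<in> X")
        case True then have "Y = X" using X(2) by auto
        then show ?thesis using X(1) by simp
      next
        case False
        then have "X = S" using noS[OF X(1) False] X(3) by simp
        then have "Y = U1" using X(2) U1S False by simp
        then show ?thesis using U1(1) by simp
      qed
    next
      assume a: "Y \<in> F \<and> \<not> S \<subseteq> Y"
      then obtain X where X: "X \<in> G" "Y = X - {n+1}" unfolding F_def by blast
      show "Y \<in> G"
      proof (cases "n+1 \<in> X")
        case True
        then have "U1 \<subseteq> X" by (rule chain[OF X(1)])
        then have "S \<subseteq> Y" using X(2) unfolding S_def by blast
        then show ?thesis using a by blast
      next
        case False then show ?thesis using X by simp
      qed
    qed
  qed
  have G_C: "Y \<in> faceC n F S \<or> Y = S" if Y: "Y \<in> G" for Y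
  proof (cases "n+1 \<in> Y")
    case True
    have "U1 \<subseteq> Y" by (rule chain[OF Y True])
    then have "S \<subseteq> Y - {n+1}" unfolding S_def by blast
    moreover have "Y - {n+1} \<in> F" unfolding F_def using Y by blast
    moreover have "Y = insert (n+1) (Y - {n+1})" using True by auto
    ultimately have "Y \<in> faceC n F S" unfolding faceC_iff by blast
    then show ?thesis by simp
  next
    case False
    have YF: "Y \<in> F" unfolding F_def using Y False by force
    show ?thesis
    proof (cases "S \<subseteq> Y")
      case True then show ?thesis using noS[OF Y False] by simp
    next
      case False then show ?thesis using YF unfolding faceC_iff by blast
    qed
  qed
  show ?thesis
  proof (cases "S \<in> G")
    case True
    have "G = faceD n F S" unfolding faceD_def using C_G G_C True by blast
    then show ?thesis using QD[OF Fw SF] by simp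
  next
    case False
    have "G = faceC n F S" using C_G G_C False by blast
    then show ?thesis using QC[OF Fw SF] by simp
  qed
qed

lemma Q_eq:
  assumes n: "3 \<le> n"
  shows "Qcomplex n = Kst n 2"
proof
  show "Qcomplex n \<subseteq> Kst n 2" using Q_sub[OF n] by blast
next
  show "Kst n 2 \<subseteq> Qcomplex n"
  proof
    fix G assume G: "G \<in> Kst n 2"
    show "G \<in> Qcomplex n"
    proof (cases "\<forall>X\<in>G. n+1 \<notin> X")
      case True then show ?thesis by (rule Q_sup1[OF n G])
    next
      case False
      then obtain U where "U \<in> G \<and> n+1 \<in> U" by blast
      then obtain U1 where U1: "U1 \<in> G \<and> n+1 \<in> U1"
        and mn: "\<forall>V. V \<in> G \<and> n+1 \<in> V \<longrightarrow> card U1 \<le> card V"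
        using ex_has_least_nat[of "\<lambda>V. V \<in> G \<and> n+1 \<in> V" U card] by blast
      show ?thesis by (rule Q_sup2[OF n G]) (use U1 mn in auto)
    qed
  qed
qed

theorem mainTheorem11:
  fixes n :: nat
  assumes "n \<ge> 3"
  shows "subcomplex (Qcomplex n) (whitehouse (n+1))
         \<and> geom_realization (Qcomplex n) \<noteq> {}
         \<and> contractible (geom_realization (Qcomplex n))"
proof -
  have n: "3 \<le> n" using assms by simp
  have Q: "Qcomplex n = Kst n 2" by (rule Q_eq[OF n])
  have sc: "simplicial_complex (Kst n 2)"
    unfolding simplicial_complex_def
  proof (intro ballI conjI allI impI)
    fix F assume F: "F \<in> Kst n 2"
    show "finite F" by (rule finite_subset[OF Kst_V[OF F]]) simp
    fix G assume "G \<subseteq> F"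
    then show "G \<in> Kst n 2" by (rule Kst_sub[OF F])
  qed
  have sub: "Kst n 2 \<subseteq> whitehouse (n+1)" using KstD(1) by blast
  have e: "{} \<in> whitehouse n" by (rule whI) auto
  have one: "{{2..n}} \<in> Kst n 2" using B_in[OF n e] by simp
  let ?f = "\<lambda>w. if w = {2..n} then 1 else (0::real)"
  have "?f \<in> geom_realization (Kst n 2)"
    by (rule geomI[OF _ one]) auto
  then have ne: "geom_realization (Kst n 2) \<noteq> {}" by blast
  have c: "contractible (geom_realization (Kst n 2))"
    by (rule Kst_contractible[OF n]) (use n in auto)
  show ?thesis unfolding Q subcomplex_def using sc sub ne c by blast
qed

end
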